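(* Let $A(q,x)$, $B(q,x)$, $C(q,x)$ be the generating series $\sum_{n\ge0}\sum_{\gamma\in\mathcal{D}_n}q^{\#w(\gamma)}x^n$ for $w=dduu$, $w=dudu$, $w=duuu$ respectively; let $V(q,x)=\sum_{n\ge0}\sum_{\gamma\in\mathcal{D}_n}q^{\#du(\gamma)}x^n$; and let $F(y,q,x)=\sum_{n\ge0}\sum_{\gamma\in\mathcal{D}_n}y^{\#du(\gamma)}q^{\#duu(\gamma)}x^n$. Here $\#w(\gamma)$ is the number of occurrences of the factor $w$ in $\gamma$. Let $SC_3(x)=\sum_{n\ge0}sc_3(\mathcal{D}_n)x^n$, where $sc_3(\mathcal{D}_n)$ is the number of saturated chains of length 3 in $\mathcal{D}_n$. Then $$ SC_3(x)=2\left[\frac{\partial A}{\partial q}\right]_{q=1}+2\left[\frac{\partial B}{\partial q}\right]_{q=1}+2\left[\frac{\partial C}{\partial q}\right]_{q=1}+\left[\frac{\partial^3 V}{\partial q^3}\right]_{q=1}+6\left[\frac{\partial^2 F}{\partial y\,\partial q}-\frac{\partial F}{\partial q}\right]_{y=q=1}. $$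
   Context: A Dyck path of semilength $n$ is a lattice path from $(0,0)$ to $(2n,0)$ with steps $u=(1,1)$ and $d=(1,-1)$ never going below the $x$-axis, identified with a word over $\{u,d\}$. $\mathcal{D}_n$ is the set of Dyck paths of semilength $n$ ordered by containment: $\gamma\le\gamma'$ iff $\gamma$ lies weakly below $\gamma'$. A saturated chain of length $h$ is a sequence $\gamma^{(0)}<\cdots<\gamma^{(h)}$ in which each element covers the previous one. *)

theory Defs
  imports "HOL-Computational_Algebra.Polynomial" "HOL-Computational_Algebra.Formal_Power_Series"
begin

text \<open>Dyck words: a word over {u,d} is a list of booleans, True = u = (1,1), False = d = (1,-1).\<close>

abbreviation u_step :: bool where "u_step \<equiv> True"
abbreviation d_step :: bool where "d_step \<equiv> False"

definition height :: "bool list \<Rightarrow> nat \<Rightarrow> int" where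
  "height \<gamma> i = (\<Sum>j<i. if \<gamma> ! j then 1 else -1)"

definition dyck_paths :: "nat \<Rightarrow> bool list set" where
  "dyck_paths n = {\<gamma>. length \<gamma> = 2 * n \<and> (\<forall>i \<le> 2 * n. 0 \<le> height \<gamma> i) \<and> height \<gamma> (2 * n) = 0}"

definition path_le :: "bool list \<Rightarrow> bool list \<Rightarrow> bool" where
  "path_le \<gamma> \<gamma>' \<longleftrightarrow> (\<forall>i \<le> length \<gamma>. height \<gamma> i \<le> height \<gamma>' i)"

definition covers :: "nat \<Rightarrow> bool list \<Rightarrow> bool list \<Rightarrow> bool" where
  "covers n a b \<longleftrightarrow> a \<in> dyck_paths n \<and> b \<in> dyck_paths n \<and> path_le a b \<and> a \<noteq> b \<and>
     \<not> (\<exists>c \<in> dyck_paths n. c \<noteq> a \<and> c \<noteq> b \<and> path_le a c \<and> path_le c b)"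

definition sat_chains :: "nat \<Rightarrow> nat \<Rightarrow> bool list list set" where
  "sat_chains n h = {cs. length cs = h + 1 \<and> set cs \<subseteq> dyck_paths n \<and>
     (\<forall>i < h. covers n (cs ! i) (cs ! (i + 1)))}"

definition sc :: "nat \<Rightarrow> nat \<Rightarrow> nat" where
  "sc h n = card (sat_chains n h)"

definition occ :: "bool list \<Rightarrow> bool list \<Rightarrow> nat" where
  "occ w \<gamma> = card {i. i + length w \<le> length \<gamma> \<and> take (length w) (drop i \<gamma>) = w}"

definition gf_factor :: "bool list \<Rightarrow> int poly fps" where
  "gf_factor w = Abs_fps (\<lambda>n. \<Sum>\<gamma>\<in>dyck_paths n. monom 1 (occ w \<gamma>))"

definition A_series :: "int poly fps" where
  "A_series = gf_factor [d_step, d_step, u_step, u_step]"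
definition B_series :: "int poly fps" where
  "B_series = gf_factor [d_step, u_step, d_step, u_step]"
definition C_series :: "int poly fps" where
  "C_series = gf_factor [d_step, u_step, u_step, u_step]"
definition V_series :: "int poly fps" where
  "V_series = gf_factor [d_step, u_step]"

text \<open>F(y,q,x): coefficients are polynomials in y (outer) whose coefficients are polynomials in q.\<close>
definition F_series :: "int poly poly fps" where
  "F_series = Abs_fps (\<lambda>n. \<Sum>\<gamma>\<in>dyck_paths n.
      monom (monom 1 (occ [d_step, u_step, u_step] \<gamma>)) (occ [d_step, u_step] \<gamma>))"

definition SC3 :: "int fps" where
  "SC3 = Abs_fps (\<lambda>n. int (sc 3 n))"

definition dq_at1 :: "int poly fps \<Rightarrow> int fps" where
  "dq_at1 S = Abs_fps (\<lambda>n. poly (pderiv (fps_nth S n)) 1)"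
definition dq3_at1 :: "int poly fps \<Rightarrow> int fps" where
  "dq3_at1 S = Abs_fps (\<lambda>n. poly ((pderiv ^^ 3) (fps_nth S n)) 1)"
text \<open>[d^2/dy dq]_{y=q=1} and [d/dq]_{y=q=1} for series with y outer, q inner.\<close>
definition dydq_at11 :: "int poly poly fps \<Rightarrow> int fps" where
  "dydq_at11 S = Abs_fps (\<lambda>n. poly (map_poly (\<lambda>c. poly c 1) (pderiv (map_poly pderiv (fps_nth S n)))) 1)"
definition dq_at11 :: "int poly poly fps \<Rightarrow> int fps" where
  "dq_at11 S = Abs_fps (\<lambda>n. poly (map_poly (\<lambda>c. poly c 1) (map_poly pderiv (fps_nth S n))) 1)"

end

theory Submission
  imports Defs
begin


lemma pderiv_sum': "pderiv (sum f S) = (\<Sum>x\<in>S. pderiv (f x))"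
  using higher_pderiv_sum[of 1 f S] by simp

lemma map_poly_sum': "(\<And>a b. g (a + b) = g a + g b) \<Longrightarrow> g 0 = 0 \<Longrightarrow>
   map_poly g (sum f S) = (\<Sum>x\<in>S. map_poly g (f x))"
proof (induction S rule: infinite_finite_induct)
  case (insert x F)
  have "map_poly g (f x + sum f F) = map_poly g (f x) + map_poly g (sum f F)"
    by (rule poly_eqI) (simp add: coeff_map_poly insert.prems)
  then show ?case using insert by simp
qed auto

lemma ev_dq1:
  "poly (pderiv (\<Sum>\<gamma>\<in>S. monom (1::int) (f \<gamma>))) 1 = (\<Sum>\<gamma>\<in>S. int (f \<gamma>))"
  by (simp add: pderiv_sum' poly_sum pderiv_monom poly_monom)

lemma ev_dq3:
  "poly ((pderiv ^^ 3) (\<Sum>\<gamma>\<in>S. monom (1::int) (f \<gamma>))) 1 =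
    (\<Sum>\<gamma>\<in>S. int (f \<gamma>) * (int (f \<gamma>) - 1) * (int (f \<gamma>) - 2))"
proof -
  have "poly ((pderiv ^^ 3) (monom (1::int) k)) 1 = int k * (int k - 1) * (int k - 2)" for k
  proof -
    have "(pderiv ^^ 3) (monom (1::int) k) = pderiv (pderiv (pderiv (monom 1 k)))"
      by (simp add: numeral_3_eq_3)
    also have "\<dots> = monom (of_nat (k-1-1) * (of_nat (k-1) * of_nat k)) (k - 1 - 1 - 1)"
      by (simp add: pderiv_monom)
    finally show ?thesis
      by (cases k; cases "k - 1"; auto simp: poly_monom algebra_simps)
  qed
  then show ?thesis by (simp add: higher_pderiv_sum poly_sum)
qed

lemma ev_F1:
  "poly (map_poly (\<lambda>c. poly c 1) (pderiv (map_poly pderiv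
     (\<Sum>\<gamma>\<in>S. monom (monom (1::int) (m \<gamma>)) (k \<gamma>))))) 1 = (\<Sum>\<gamma>\<in>S. int (k \<gamma>) * int (m \<gamma>))"
  by (simp add: map_poly_sum' pderiv_add pderiv_sum' poly_sum map_poly_monom pderiv_monom poly_monom)

lemma ev_F2:
  "poly (map_poly (\<lambda>c. poly c 1) (map_poly pderiv
     (\<Sum>\<gamma>\<in>S. monom (monom (1::int) (m \<gamma>)) (k \<gamma>)))) 1 = (\<Sum>\<gamma>\<in>S. int (m \<gamma>))"
  by (simp add: map_poly_sum' pderiv_add pderiv_sum' poly_sum map_poly_monom pderiv_monom poly_monom)



definition flip :: "bool list \<Rightarrow> nat \<Rightarrow> bool list" where
  "flip g i = g[i := True, Suc i := False]"
definition valley :: "bool list \<Rightarrow> nat \<Rightarrow> bool" where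
  "valley g i \<longleftrightarrow> Suc i < length g \<and> \<not> g!i \<and> g!Suc i"

lemma height_0[simp]: "height g 0 = 0" by (simp add: height_def)
lemma height_Suc: "height g (Suc i) = height g i + (if g!i then 1 else -1)"
  by (simp add: height_def)

lemma length_flip[simp]: "length (flip g i) = length g" by (simp add: flip_def)

lemma height_flip:
  assumes "valley g i"
  shows "height (flip g i) j = height g j + (if j = Suc i then 2 else 0)"
proof (induction j)
  case (Suc j)
  have L: "i < length g" "Suc i < length g" using assms by (auto simp: valley_def)
  show ?case
  proof (cases "j = i")
    case True then show ?thesis using Suc assms L
      by (simp add: height_Suc flip_def valley_def nth_list_update)
  next
    case F: False
    show ?thesis
    proof (cases "j = Suc i")
      case True then show ?thesis using Suc assms L
        by (simp add: height_Suc flip_def valley_def nth_list_update)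
    next
      case False then show ?thesis using Suc F
        by (simp add: height_Suc flip_def nth_list_update)
    qed
  qed
qed simp

lemma height_parity: "even (height g j + int j)"
proof (induction j)
  case (Suc j) then show ?case by (auto simp: height_Suc)
qed simp

lemma heights_eq:
  assumes "length a = length b" "\<forall>j\<le>length a. height a j = height b j"
  shows "a = b"
proof (rule nth_equalityI)
  fix j assume j: "j < length a"
  have "height a (Suc j) - height a j = height b (Suc j) - height b j"
    using assms j by simp
  then show "a ! j = b ! j" by (auto simp: height_Suc split: if_splits)
qed (use assms in auto)

lemma dyck_length: "g \<in> dyck_paths n \<Longrightarrow> length g = 2 * n"
  by (simp add: dyck_paths_def)

lemma valley_bounds:
  assumes "g \<in> dyck_paths n" "valley g i"
  shows "0 < i" "i + 2 < 2 * n"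
proof -
  have L: "length g = 2*n" "\<forall>j\<le>2*n. 0 \<le> height g j" "height g (2*n) = 0"
    using assms(1) by (auto simp: dyck_paths_def)
  have v: "Suc i < 2*n" "\<not> g!i" "g!Suc i" using assms(2) L by (auto simp: valley_def)
  show "0 < i"
  proof (rule ccontr)
    assume "\<not> 0 < i" then have "i = 0" by simp
    then have "height g 1 = -1" using v by (simp add: height_Suc[of g 0, simplified])
    moreover have "0 \<le> height g 1" using L(2) v by simp
    ultimately show False by simp
  qed
  show "i + 2 < 2 * n"
  proof (rule ccontr)
    assume "\<not> i + 2 < 2 * n"
    then have e: "2*n = Suc (Suc i)" using v by simp
    have "height g (Suc (Suc i)) = height g (Suc i) + 1" using v by (simp add: height_Suc[of g "Suc i"])
    then have "height g (Suc i) = -1" using L e by simp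
    moreover have "0 \<le> height g (Suc i)" using L(2) v by simp
    ultimately show False by simp
  qed
qed

lemma flip_dyck:
  assumes "g \<in> dyck_paths n" "valley g i"
  shows "flip g i \<in> dyck_paths n"
proof -
  have b: "i + 2 < 2*n" using valley_bounds[OF assms] by simp
  show ?thesis using assms b
    by (auto simp: dyck_paths_def height_flip)
qed

lemma path_le_flip:
  assumes "g \<in> dyck_paths n" "valley g i"
  shows "path_le g (flip g i)" "flip g i \<noteq> g"
proof -
  show "path_le g (flip g i)" using assms by (simp add: path_le_def height_flip)
  show "flip g i \<noteq> g"
  proof
    assume "flip g i = g"
    then have "height (flip g i) (Suc i) = height g (Suc i)" by simp
    then show False using height_flip[OF assms(2), of "Suc i"] by simp
  qed
qed

lemma even_between: "(x::int) \<le> y \<Longrightarrow> y \<le> x + 2 \<Longrightarrow> even (y - x) \<Longrightarrow> y = x \<or> y = x + 2"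
  by presburger
lemma even_gap: "(x::int) < y \<Longrightarrow> even (y - x) \<Longrightarrow> x + 2 \<le> y"
  by presburger

lemma covers_flip:
  assumes "g \<in> dyck_paths n" "valley g i"
  shows "covers n g (flip g i)"
proof -
  have F: "flip g i \<in> dyck_paths n" using flip_dyck[OF assms] .
  have Lg: "length g = 2*n" using assms dyck_length by blast
  have "\<not> (\<exists>c\<in>dyck_paths n. c \<noteq> g \<and> c \<noteq> flip g i \<and> path_le g c \<and> path_le c (flip g i))"
  proof
    assume "\<exists>c\<in>dyck_paths n. c \<noteq> g \<and> c \<noteq> flip g i \<and> path_le g c \<and> path_le c (flip g i)"
    then obtain c where c: "c \<in> dyck_paths n" "c \<noteq> g" "c \<noteq> flip g i" "path_le g c" "path_le c (flip g i)"
      by blast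
    have Lc: "length c = 2*n" using c dyck_length by blast
    have le1: "height g j \<le> height c j" if "j \<le> 2*n" for j using c(4) that Lg by (auto simp: path_le_def)
    have le2: "height c j \<le> height g j + (if j = Suc i then 2 else 0)" if "j \<le> 2*n" for j
      using c(5) that Lc height_flip[OF assms(2), of j] by (auto simp: path_le_def)
    have eq: "height c j = height g j" if "j \<le> 2*n" "j \<noteq> Suc i" for j
      using le1[OF that(1)] le2[OF that(1)] that by simp
    have si: "Suc i \<le> 2*n" using assms(2) Lg by (simp add: valley_def)
    have p1: "even (height c (Suc i) + int (Suc i))" "even (height g (Suc i) + int (Suc i))"
      by (rule height_parity)+
    have "height c (Suc i) = height g (Suc i) \<or> height c (Suc i) = height g (Suc i) + 2"
    proof -
      have a: "height g (Suc i) \<le> height c (Suc i)" "height c (Suc i) \<le> height g (Suc i) + 2"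
        using le1[OF si] le2[OF si] by auto
      have "even (height c (Suc i) - height g (Suc i))"
        using dvd_diff[OF p1] by simp
      then show ?thesis using a even_between by blast
    qed
    then show False
    proof
      assume h: "height c (Suc i) = height g (Suc i)"
      have "c = g" by (rule heights_eq) (use Lc Lg eq h in \<open>auto\<close>)
      then show False using c by simp
    next
      assume h: "height c (Suc i) = height g (Suc i) + 2"
      have "c = flip g i" by (rule heights_eq) (use Lc Lg eq h height_flip[OF assms(2)] in \<open>auto\<close>)
      then show False using c by simp
    qed
  qed
  then show ?thesis using assms F path_le_flip[OF assms]
    by (simp add: covers_def)
qed

lemma covers_valley:
  assumes "covers n a b"
  shows "\<exists>i. valley a i \<and> b = flip a i"
proof -
  have a: "a \<in> dyck_paths n" "b \<in> dyck_paths n" "path_le a b" "a \<noteq> b"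
    and nc: "\<not> (\<exists>c\<in>dyck_paths n. c \<noteq> a \<and> c \<noteq> b \<and> path_le a c \<and> path_le c b)"
    using assms by (auto simp: covers_def)
  have La: "length a = 2*n" and Lb: "length b = 2*n" using a dyck_length by blast+
  have Da: "\<forall>j\<le>2*n. 0 \<le> height a j" "height a (2*n) = 0"
    and Db: "\<forall>j\<le>2*n. 0 \<le> height b j" "height b (2*n) = 0" using a by (auto simp: dyck_paths_def)
  have le: "height a j \<le> height b j" if "j \<le> 2*n" for j using a(3) that La by (auto simp: path_le_def)
  define P where "P j \<longleftrightarrow> j \<le> 2*n \<and> height a j < height b j" for j
  have "\<exists>j. P j"
  proof (rule ccontr)
    assume "\<not> (\<exists>j. P j)"
    then have "\<forall>j\<le>length a. height a j = height b j" using le La by (force simp: P_def)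
    then have "a = b" using heights_eq La Lb by simp
    then show False using a by simp
  qed
  then obtain j where j: "P j" and mn: "\<And>y. P y \<Longrightarrow> nat (height a j) \<le> nat (height a y)"
    using ex_has_least_nat[of P _ "\<lambda>j. nat (height a j)"] by blast
  have j0: "j \<noteq> 0" proof assume "j = 0" then show False using j by (simp add: P_def) qed
  have jn: "j \<noteq> 2*n" using j Da Db by (auto simp: P_def)
  obtain i where ij: "j = Suc i" using j0 by (cases j) auto
  have pos: "0 \<le> height a i" "0 \<le> height a (Suc (Suc i))" using Da j jn ij by (auto simp: P_def)
  have ai: "\<not> a ! i"
  proof
    assume "a ! i"
    then have h: "height a j = height a i + 1" using ij by (simp add: height_Suc)
    have "height b j \<le> height b i + 1" using ij by (simp add: height_Suc)
    then have "P i" using j h ij by (simp add: P_def)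
    from mn[OF this] h pos show False by simp
  qed
  have aj: "a ! Suc i"
  proof (rule ccontr)
    assume "\<not> a ! Suc i"
    then have h: "height a (Suc j) = height a j - 1" using ij by (simp add: height_Suc)
    have "height b (Suc j) \<ge> height b j - 1" by (simp add: height_Suc)
    then have "P (Suc j)" using j h jn by (simp add: P_def)
    from mn[OF this] h pos ij show False by simp
  qed
  have v: "valley a i" using ai aj ij j jn La by (simp add: valley_def P_def)
  have "flip a i = b"
  proof (rule ccontr)
    assume ne: "flip a i \<noteq> b"
    have "even (height b j - height a j)"
      using dvd_diff[OF height_parity[of b j] height_parity[of a j]] by simp
    then have "height a j + 2 \<le> height b j" using j even_gap by (auto simp: P_def)
    then have "path_le (flip a i) b" using le ij La by (auto simp: path_le_def height_flip[OF v])
    then show False using nc flip_dyck[OF a(1) v] path_le_flip[OF a(1) v] ne by blast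
  qed
  then show ?thesis using v by blast
qed

lemma covers_iff:
  assumes "a \<in> dyck_paths n"
  shows "covers n a b \<longleftrightarrow> (\<exists>i. valley a i \<and> b = flip a i)"
  using covers_valley covers_flip[OF assms] by blast



definition VS :: "bool list \<Rightarrow> nat set" where "VS g = {i. valley g i}"

lemma finite_VS[simp]: "finite (VS g)"
  by (rule finite_subset[of _ "{..<length g}"]) (auto simp: VS_def valley_def)

lemma finite_dyck[simp]: "finite (dyck_paths n)"
proof -
  have "dyck_paths n \<subseteq> {xs. set xs \<subseteq> UNIV \<and> length xs = 2*n}" by (auto simp: dyck_paths_def)
  then show ?thesis using finite_lists_length_eq[of "UNIV :: bool set" "2*n"] finite_subset by auto
qed

lemma flip_inj:
  assumes "valley g i" "valley g i'" "flip g i = flip g i'"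
  shows "i = i'"
proof (rule ccontr)
  assume ne: "i \<noteq> i'"
  show False
  proof (cases "i < i'")
    case True
    have "flip g i ! i = True" using assms(1) by (simp add: flip_def valley_def nth_list_update)
    moreover have "flip g i' ! i = g ! i" using True by (simp add: flip_def nth_list_update)
    ultimately show False using assms by (simp add: valley_def)
  next
    case False
    then have lt: "i' < i" using ne by simp
    have "flip g i' ! i' = True" using assms(2) by (simp add: flip_def valley_def nth_list_update)
    moreover have "flip g i ! i' = g ! i'" using lt by (simp add: flip_def nth_list_update)
    ultimately show False using assms by (simp add: valley_def)
  qed
qed

definition chainmap :: "bool list \<times> nat \<times> nat \<times> nat \<Rightarrow> bool list list" where
  "chainmap = (\<lambda>(a,i,j,k). [a, flip a i, flip (flip a i) j, flip (flip (flip a i) j) k])"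

definition Sg :: "nat \<Rightarrow> (bool list \<times> nat \<times> nat \<times> nat) set" where
  "Sg n = (SIGMA a:dyck_paths n. SIGMA i:VS a. SIGMA j:VS (flip a i). VS (flip (flip a i) j))"

lemma len4: "length cs = 4 \<Longrightarrow> \<exists>a b c d. cs = [a,b,c,d]"
  by (simp add: length_Suc_conv numeral_eq_Suc) blast

lemma sat_chains_eq: "sat_chains n 3 = chainmap ` Sg n"
proof
  show "sat_chains n 3 \<subseteq> chainmap ` Sg n"
  proof
    fix cs assume cs: "cs \<in> sat_chains n 3"
    then have l: "length cs = 4" and s: "set cs \<subseteq> dyck_paths n"
      and cv: "\<forall>i<3. covers n (cs ! i) (cs ! (i + 1))" by (auto simp: sat_chains_def)
    obtain a b c d where e: "cs = [a,b,c,d]" using len4[OF l] by blast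
    have aD: "a \<in> dyck_paths n" using s e by simp
    have "covers n a b" "covers n b c" "covers n c d" using cv e
      by (auto simp: numeral_eq_Suc less_Suc_eq)
    then obtain i j k where "valley a i" "b = flip a i" "valley b j" "c = flip b j" "valley c k" "d = flip c k"
      using covers_valley by meson
    then show "cs \<in> chainmap ` Sg n"
      using aD e by (auto simp: Sg_def chainmap_def VS_def intro!: image_eqI[where x="(a,i,j,k)"])
  qed
next
  show "chainmap ` Sg n \<subseteq> sat_chains n 3"
  proof
    fix cs assume "cs \<in> chainmap ` Sg n"
    then obtain a i j k where x: "a \<in> dyck_paths n" "valley a i" "valley (flip a i) j"
      "valley (flip (flip a i) j) k" and e: "cs = chainmap (a,i,j,k)"
      by (auto simp: Sg_def VS_def)
    have d1: "flip a i \<in> dyck_paths n" using flip_dyck x by blast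
    have d2: "flip (flip a i) j \<in> dyck_paths n" using flip_dyck d1 x by blast
    have d3: "flip (flip (flip a i) j) k \<in> dyck_paths n" using flip_dyck d2 x by blast
    have c: "covers n a (flip a i)" "covers n (flip a i) (flip (flip a i) j)"
      "covers n (flip (flip a i) j) (flip (flip (flip a i) j) k)"
      using covers_flip x d1 d2 by blast+
    have "\<forall>t<3. covers n (cs ! t) (cs ! (t + 1))"
    proof (intro allI impI)
      fix t :: nat assume "t < 3"
      then have "t = 0 \<or> t = 1 \<or> t = 2" by auto
      then show "covers n (cs ! t) (cs ! (t + 1))" using c e by (auto simp: chainmap_def)
    qed
    then show "cs \<in> sat_chains n 3" using x d1 d2 d3 e by (simp add: sat_chains_def chainmap_def)
  qed
qed

lemma inj_chainmap: "inj_on chainmap (Sg n)"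
proof (rule inj_onI)
  fix x y assume x: "x \<in> Sg n" and y: "y \<in> Sg n" and eq: "chainmap x = chainmap y"
  obtain a i j k where xe: "x = (a,i,j,k)" by (cases x) auto
  obtain a' i' j' k' where ye: "y = (a',i',j',k')" by (cases y) auto
  have aa: "a = a'" using eq xe ye by (simp add: chainmap_def)
  have ii: "i = i'" using eq xe ye x y aa flip_inj by (auto simp: chainmap_def Sg_def VS_def)
  have jj: "j = j'" using eq xe ye x y aa ii flip_inj by (auto simp: chainmap_def Sg_def VS_def)
  have kk: "k = k'" using eq xe ye x y aa ii jj flip_inj by (auto simp: chainmap_def Sg_def VS_def)
  show "x = y" using xe ye aa ii jj kk by simp
qed

definition cnt :: "bool list \<Rightarrow> nat" where
  "cnt g = (\<Sum>i\<in>VS g. \<Sum>j\<in>VS (flip g i). card (VS (flip (flip g i) j)))"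

lemma sc3_sum: "sc 3 n = (\<Sum>g\<in>dyck_paths n. cnt g)"
proof -
  have "sc 3 n = card (Sg n)"
    unfolding sc_def sat_chains_eq using card_image[OF inj_chainmap] by simp
  also have "\<dots> = (\<Sum>g\<in>dyck_paths n. cnt g)"
    by (simp add: Sg_def cnt_def)
  finally show ?thesis .
qed



definition mt :: "bool list \<Rightarrow> bool list \<Rightarrow> nat \<Rightarrow> bool" where
  "mt w g j \<longleftrightarrow> j + length w \<le> length g \<and> take (length w) (drop j g) = w"

lemma occ_mt: "occ w g = card {j. mt w g j}" by (simp add: occ_def mt_def)

lemma finite_mt[simp]: "finite {j. mt w g j}"
  by (rule finite_subset[of _ "{..length g}"]) (auto simp: mt_def)

lemma mt_nth: "mt w g j \<longleftrightarrow> j + length w \<le> length g \<and> (\<forall>k<length w. g!(j+k) = w!k)"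
  unfolding mt_def by (auto simp: list_eq_iff_nth_eq)

lemma mt2: "mt [a,b] g j \<longleftrightarrow> j + 2 \<le> length g \<and> g!j = a \<and> g!Suc j = b"
  by (auto simp: mt_nth less_Suc_eq numeral_eq_Suc)
lemma mt3: "mt [a,b,c] g j \<longleftrightarrow> j + 3 \<le> length g \<and> g!j = a \<and> g!Suc j = b \<and> g!Suc (Suc j) = c"
  by (auto simp: mt_nth less_Suc_eq numeral_eq_Suc)
lemma mt4: "mt [a,b,c,d] g j \<longleftrightarrow> j + 4 \<le> length g \<and> g!j = a \<and> g!Suc j = b \<and> g!Suc (Suc j) = c
   \<and> g!Suc (Suc (Suc j)) = d"
  by (auto simp: mt_nth less_Suc_eq numeral_eq_Suc)

lemma nth_flip: "Suc i < length g \<Longrightarrow>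
  flip g i ! p = (if p = i then True else if p = Suc i then False else g!p)"
  by (simp add: flip_def nth_list_update)

lemma mt_local:
  assumes "valley g i" "j + length w \<le> i \<or> Suc (Suc i) \<le> j"
  shows "mt w (flip g i) j \<longleftrightarrow> mt w g j"
proof -
  have "Suc i < length g" using assms by (simp add: valley_def)
  then have "flip g i ! (j+k) = g ! (j+k)" if "k < length w" for k
    using assms that by (auto simp: nth_flip)
  then show ?thesis by (simp add: mt_nth)
qed

lemma occ_sum: "w \<noteq> [] \<Longrightarrow> int (occ w g) = (\<Sum>j<length g. of_bool (mt w g j))"
proof -
  assume "w \<noteq> []"
  then have pos: "0 < length w" by simp
  then have "{..<length g} \<inter> {j. mt w g j} = {j. mt w g j}"
    using \<open>w \<noteq> []\<close> by (cases w) (auto simp: mt_def)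
  then show ?thesis by (simp add: occ_mt)
qed

lemma occ_change:
  assumes "valley g i" "w \<noteq> []"
  shows "int (occ w (flip g i)) = int (occ w g) +
     (\<Sum>j\<in>{Suc i - length w..Suc i}. of_bool (mt w (flip g i) j) - of_bool (mt w g j))"
proof -
  define A where "A = {..<length g}"
  define S where "S = {Suc i - length w..Suc i}"
  have SA: "S \<subseteq> A" using assms by (auto simp: A_def S_def valley_def)
  have z: "\<forall>j\<in>A - S. (of_bool (mt w (flip g i) j) - of_bool (mt w g j) :: int) = 0"
  proof
    fix j assume "j \<in> A - S"
    then have "j + length w \<le> i \<or> Suc (Suc i) \<le> j" using assms(2) by (auto simp: S_def)
    then show "(of_bool (mt w (flip g i) j) - of_bool (mt w g j) :: int) = 0"
      using mt_local[OF assms(1)] by simp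
  qed
  have "int (occ w (flip g i)) - int (occ w g) = (\<Sum>j\<in>A. of_bool (mt w (flip g i) j) - of_bool (mt w g j))"
    using occ_sum[OF assms(2)] by (simp add: A_def sum_subtractf)
  also have "\<dots> = (\<Sum>j\<in>S. of_bool (mt w (flip g i) j) - of_bool (mt w g j))"
    using sum.mono_neutral_right[of A S, OF _ SA z] by (simp add: A_def)
  finally show ?thesis by (simp add: S_def)
qed

lemma VS_occ: "int (card (VS g)) = int (occ [False, True] g)"
proof -
  have "VS g = {j. mt [False,True] g j}" by (auto simp: VS_def valley_def mt2)
  then show ?thesis by (simp add: occ_mt)
qed

lemma dyck_valley:
  assumes "g \<in> dyck_paths n" "valley g i"
  shows "\<exists>i0. i = Suc i0 \<and> Suc (Suc (Suc i0)) < length g"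
  using valley_bounds[OF assms] dyck_length[OF assms(1)] by (cases i) auto

lemma L1:
  assumes "g \<in> dyck_paths n" "valley g i"
  shows "int (card (VS (flip g i))) = int (card (VS g)) - 1 + of_bool (\<not> g!(i-1)) + of_bool (g!(i+2))"
proof -
  obtain i0 where i: "i = Suc i0" "Suc (Suc (Suc i0)) < length g" using dyck_valley[OF assms] by blast
  have v: "\<not> g!i" "g!Suc i" using assms by (auto simp: valley_def)
  have S: "{Suc i - length [False,True]..Suc i} = {i0, Suc i0, Suc (Suc i0)}" using i by auto
  show ?thesis
    unfolding VS_occ occ_change[OF assms(2), of "[False,True]", simplified] S
    using i v by (simp add: mt2 nth_flip)
qed

lemma sum3: "sum f {a, Suc a, Suc (Suc a)} = f a + f (Suc a) + f (Suc (Suc a))" by (simp add: add.assoc)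
lemma sum4: "sum f {a, Suc a, Suc (Suc a), Suc (Suc (Suc a))} =
   f a + f (Suc a) + f (Suc (Suc a)) + f (Suc (Suc (Suc a)))" by (simp add: add.assoc)

abbreviation "ddu \<equiv> [False,False,True]"
abbreviation "duu \<equiv> [False,True,True]"

lemma L2:
  assumes "g \<in> dyck_paths n" "valley g i"
  shows "int (occ ddu (flip g i)) + int (occ duu (flip g i)) =
    int (occ ddu g) + int (occ duu g) - of_bool (\<not> g!(i-1)) - of_bool (g!(i+2))
    + of_bool (2 \<le> i \<and> \<not> g!(i-2)) + of_bool (i+3 < length g \<and> g!(i+3))"
proof -
  obtain i0 where i: "i = Suc i0" "Suc (Suc (Suc i0)) < length g" using dyck_valley[OF assms] by blast
  have v: "\<not> g!i" "g!Suc i" using assms by (auto simp: valley_def)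
  note c1 = occ_change[OF assms(2), of ddu, simplified]
  note c2 = occ_change[OF assms(2), of duu, simplified]
  show ?thesis
  proof (cases i0)
    case 0
    have S: "{Suc i - 3..Suc i} = {0, Suc 0, Suc (Suc 0)}" using i 0 by auto
    show ?thesis unfolding c1 c2 S sum3[of _ 0] using i v 0
      by (simp add: mt3 nth_flip numeral_eq_Suc del: sum_of_bool_eq)
  next
    case (Suc i1)
    have S: "{Suc i - 3..Suc i} = {i1, Suc i1, Suc (Suc i1), Suc (Suc (Suc i1))}" using i Suc by auto
    show ?thesis unfolding c1 c2 S sum4 using i v Suc
      by (simp add: mt3 nth_flip numeral_eq_Suc del: sum_of_bool_eq)
  qed
qed

lemma card_shift:
  fixes A B :: "nat set" and k :: nat
  assumes "\<And>i. i \<in> B \<longleftrightarrow> k \<le> i \<and> i - k \<in> A"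
  shows "card B = card A"
proof -
  have "B = (\<lambda>j. j + k) ` A"
  proof (rule set_eqI)
    fix i show "i \<in> B \<longleftrightarrow> i \<in> (\<lambda>j. j + k) ` A"
      using assms[of i] by (auto simp: image_iff intro!: bexI[of _ "i - k"])
  qed
  then show ?thesis by (simp add: card_image)
qed

lemma bounds_all:
  assumes "g \<in> dyck_paths n"
  shows "\<And>i. valley g i \<Longrightarrow> 0 < i \<and> i + 3 \<le> length g"
  using valley_bounds[OF assms] dyck_length[OF assms] by fastforce

abbreviation "dduu \<equiv> [False,False,True,True]"
abbreviation "dudu \<equiv> [False,True,False,True]"
abbreviation "dddu \<equiv> [False,False,False,True]"
abbreviation "duuu \<equiv> [False,True,True,True]"

lemma sum_a:
  assumes "g \<in> dyck_paths n"
  shows "(\<Sum>i\<in>VS g. of_bool (\<not> g!(i-1)) :: int) = int (occ ddu g)"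
proof -
  note b = bounds_all[OF assms]
  have "card (VS g \<inter> {i. \<not> g!(i-1)}) = card {j. mt ddu g j}"
  proof (rule card_shift[where k=1])
    fix i show "i \<in> VS g \<inter> {i. \<not> g!(i-1)} \<longleftrightarrow> 1 \<le> i \<and> i - 1 \<in> {j. mt ddu g j}"
      using b[of i] by (cases i) (auto simp: VS_def valley_def mt3)
  qed
  then show ?thesis by (simp add: occ_mt)
qed

lemma sum_b:
  assumes "g \<in> dyck_paths n"
  shows "(\<Sum>i\<in>VS g. of_bool (g!(i+2)) :: int) = int (occ duu g)"
proof -
  note b = bounds_all[OF assms]
  have "card (VS g \<inter> {i. g!(i+2)}) = card {j. mt duu g j}"
  proof (rule card_shift[where k=0])
    fix i show "i \<in> VS g \<inter> {i. g!(i+2)} \<longleftrightarrow> 0 \<le> i \<and> i - 0 \<in> {j. mt duu g j}"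
      using b[of i] by (auto simp: VS_def valley_def mt3 numeral_eq_Suc)
  qed
  then show ?thesis by (simp add: occ_mt)
qed

lemma sum_ab:
  assumes "g \<in> dyck_paths n"
  shows "(\<Sum>i\<in>VS g. of_bool (\<not> g!(i-1) \<and> g!(i+2)) :: int) = int (occ dduu g)"
proof -
  note b = bounds_all[OF assms]
  have "card (VS g \<inter> {i. \<not> g!(i-1) \<and> g!(i+2)}) = card {j. mt dduu g j}"
  proof (rule card_shift[where k=1])
    fix i show "i \<in> VS g \<inter> {i. \<not> g!(i-1) \<and> g!(i+2)} \<longleftrightarrow> 1 \<le> i \<and> i - 1 \<in> {j. mt dduu g j}"
      using b[of i] by (cases i) (auto simp: VS_def valley_def mt4 numeral_eq_Suc)
  qed
  then show ?thesis by (simp add: occ_mt)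
qed

lemma sum_c:
  assumes "g \<in> dyck_paths n"
  shows "(\<Sum>i\<in>VS g. of_bool (2 \<le> i \<and> \<not> g!(i-2)) :: int) = int (occ dddu g) + int (occ dudu g)"
proof -
  note b = bounds_all[OF assms]
  have "card (VS g \<inter> {i. 2 \<le> i \<and> \<not> g!(i-2)}) = card ({j. mt dddu g j} \<union> {j. mt dudu g j})"
  proof (rule card_shift[where k=2])
    fix i show "i \<in> VS g \<inter> {i. 2 \<le> i \<and> \<not> g!(i-2)} \<longleftrightarrow> 2 \<le> i \<and> i - 2 \<in> {j. mt dddu g j} \<union> {j. mt dudu g j}"
      using b[of i] by (cases i; cases "i - 1") (auto simp: VS_def valley_def mt4 numeral_eq_Suc)
  qed
  also have "\<dots> = occ dddu g + occ dudu g"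
  proof -
    have "{j. mt dddu g j} \<inter> {j. mt dudu g j} = {}" by (auto simp: mt4)
    then show ?thesis using card_Un_disjoint[OF finite_mt finite_mt] by (simp add: occ_mt)
  qed
  finally show ?thesis by simp
qed

lemma sum_f:
  assumes "g \<in> dyck_paths n"
  shows "(\<Sum>i\<in>VS g. of_bool (i+3 < length g \<and> g!(i+3)) :: int) = int (occ dudu g) + int (occ duuu g)"
proof -
  note b = bounds_all[OF assms]
  have "card (VS g \<inter> {i. i+3 < length g \<and> g!(i+3)}) = card ({j. mt dudu g j} \<union> {j. mt duuu g j})"
  proof (rule card_shift[where k=0])
    fix i show "i \<in> VS g \<inter> {i. i+3 < length g \<and> g!(i+3)} \<longleftrightarrow> 0 \<le> i \<and> i - 0 \<in> {j. mt dudu g j} \<union> {j. mt duuu g j}"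
      using b[of i] by (auto simp: VS_def valley_def mt4 numeral_eq_Suc)
  qed
  also have "\<dots> = occ dudu g + occ duuu g"
  proof -
    have "{j. mt dudu g j} \<inter> {j. mt duuu g j} = {}" by (auto simp: mt4)
    then show ?thesis using card_Un_disjoint[OF finite_mt finite_mt] by (simp add: occ_mt)
  qed
  finally show ?thesis by simp
qed

lemma L3:
  assumes "h \<in> dyck_paths n"
  shows "(\<Sum>j\<in>VS h. int (card (VS (flip h j)))) =
    int (card (VS h)) * (int (card (VS h)) - 1) + int (occ ddu h) + int (occ duu h)"
proof -
  define k where "k = int (card (VS h))"
  have "(\<Sum>j\<in>VS h. int (card (VS (flip h j)))) =
      (\<Sum>j\<in>VS h. (k - 1) + of_bool (\<not> h!(j-1)) + of_bool (h!(j+2)))"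
  proof (rule sum.cong)
    fix j assume "j \<in> VS h"
    then have v: "valley h j" by (simp add: VS_def)
    show "int (card (VS (flip h j))) = (k - 1) + of_bool (\<not> h!(j-1)) + of_bool (h!(j+2))"
      using L1[OF assms v] by (simp add: k_def)
  qed simp
  also have "\<dots> = k * (k - 1) + int (occ ddu h) + int (occ duu h)"
    using sum_a[OF assms] sum_b[OF assms] by (simp add: sum.distrib k_def)
  finally show ?thesis by (simp add: k_def)
qed

lemma cnt_formula:
  assumes "g \<in> dyck_paths n"
  defines "k \<equiv> int (occ [False,True] g)"
  shows "int (cnt g) = k * (k - 1) * (k - 2) + 3 * (k - 1) * (int (occ ddu g) + int (occ duu g))
     + 2 * int (occ dduu g) + 2 * int (occ dudu g) + int (occ dddu g) + int (occ duuu g)"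
proof -
  define P where "P = int (occ ddu g) + int (occ duu g)"
  define a where "a i = (of_bool (\<not> g!(i-1)) :: int)" for i
  define b where "b i = (of_bool (g!(i+2)) :: int)" for i
  define ab where "ab i = (of_bool (\<not> g!(i-1) \<and> g!(i+2)) :: int)" for i
  define c where "c i = (of_bool (2 \<le> i \<and> \<not> g!(i-2)) :: int)" for i
  define f where "f i = (of_bool (i+3 < length g \<and> g!(i+3)) :: int)" for i
  have kV: "int (card (VS g)) = k" by (simp add: k_def VS_occ)
  have "int (cnt g) = (\<Sum>i\<in>VS g. \<Sum>j\<in>VS (flip g i). int (card (VS (flip (flip g i) j))))"
    by (simp add: cnt_def)
  also have "\<dots> = (\<Sum>i\<in>VS g. (k - 1) * (k - 2) + (2 * k - 3) * a i + (2 * k - 3) * b i + 2 * ab i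
        + P + c i + f i)"
  proof (rule sum.cong)
    fix i assume "i \<in> VS g"
    then have v: "valley g i" by (simp add: VS_def)
    have fd: "flip g i \<in> dyck_paths n" by (rule flip_dyck[OF assms(1) v])
    have e1: "int (card (VS (flip g i))) = k - 1 + a i + b i"
      using L1[OF assms(1) v] kV by (simp add: a_def b_def)
    have e2: "int (occ ddu (flip g i)) + int (occ duu (flip g i)) = P - a i - b i + c i + f i"
      using L2[OF assms(1) v] by (simp add: P_def a_def b_def c_def f_def)
    have sq: "a i * a i = a i" "b i * b i = b i" "a i * b i = ab i" "b i * a i = ab i"
      by (simp_all add: a_def b_def ab_def)
    have "(\<Sum>j\<in>VS (flip g i). int (card (VS (flip (flip g i) j)))) =
       (k-1+a i+b i)*((k-1+a i+b i)-1) + (int (occ ddu (flip g i)) + int (occ duu (flip g i)))"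
      using L3[OF fd] e1 by simp
    also have "\<dots> = (k-1+a i+b i)*((k-1+a i+b i)-1) + (P - a i - b i + c i + f i)"
      using e2 by simp
    also have "\<dots> = (k - 1) * (k - 2) + (2 * k - 3) * a i + (2 * k - 3) * b i + 2 * ab i + P + c i + f i"
      by (simp add: algebra_simps sq)
    finally show "(\<Sum>j\<in>VS (flip g i). int (card (VS (flip (flip g i) j)))) =
        (k - 1) * (k - 2) + (2 * k - 3) * a i + (2 * k - 3) * b i + 2 * ab i + P + c i + f i" .
  qed simp
  also have "\<dots> = k * ((k - 1) * (k - 2)) + (2 * k - 3) * (\<Sum>i\<in>VS g. a i) + (2 * k - 3) * (\<Sum>i\<in>VS g. b i)
      + 2 * (\<Sum>i\<in>VS g. ab i) + k * P + (\<Sum>i\<in>VS g. c i) + (\<Sum>i\<in>VS g. f i)"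
    by (simp add: sum.distrib sum_distrib_left kV)
  also have "\<dots> = k * (k - 1) * (k - 2) + 3 * (k - 1) * P
     + 2 * int (occ dduu g) + 2 * int (occ dudu g) + int (occ dddu g) + int (occ duuu g)"
    unfolding a_def b_def ab_def c_def f_def sum_a[OF assms(1)] sum_b[OF assms(1)] sum_ab[OF assms(1)]
       sum_c[OF assms(1)] sum_f[OF assms(1)]
    by (simp add: P_def algebra_simps)
  finally show ?thesis by (simp add: P_def)
qed



definition rc :: "bool list \<Rightarrow> bool list" where "rc g = rev (map Not g)"

lemma rc_rc[simp]: "rc (rc g) = g" by (simp add: rc_def rev_map comp_def)
lemma length_rc[simp]: "length (rc g) = length g" by (simp add: rc_def)
lemma nth_rc: "p < length g \<Longrightarrow> rc g ! p = (\<not> g ! (length g - Suc p))"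
  by (simp add: rc_def rev_nth)

lemma all_rev_idx: "(\<forall>k<l. P k) \<longleftrightarrow> (\<forall>k<l. P (l - Suc k))"
proof
  assume a: "\<forall>k<l. P (l - Suc k)"
  show "\<forall>k<l. P k"
  proof (intro allI impI)
    fix k assume k: "k < l"
    then have "l - Suc k < l" by simp
    then have "P (l - Suc (l - Suc k))" using a by blast
    moreover have "l - Suc (l - Suc k) = k" using k by simp
    ultimately show "P k" by simp
  qed
qed auto

lemma mt_rc:
  assumes "j + length w \<le> length g"
  shows "mt w (rc g) j \<longleftrightarrow> mt (rc w) g (length g - length w - j)"
proof -
  define l where "l = length w"
  define L where "L = length g"
  have jl: "j + l \<le> L" using assms by (simp add: l_def L_def)
  have A: "mt w (rc g) j \<longleftrightarrow> (\<forall>k<l. (\<not> g!(L - Suc (j+k))) = w!k)"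
    using jl by (auto simp: mt_nth nth_rc l_def L_def)
  have B: "mt (rc w) g (L - l - j) \<longleftrightarrow> (\<forall>k<l. g!(L - l - j + k) = (\<not> w!(l - Suc k)))"
    using jl by (auto simp: mt_nth nth_rc l_def L_def)
  also have "\<dots> \<longleftrightarrow> (\<forall>k<l. g!(L - l - j + (l - Suc k)) = (\<not> w!(l - Suc (l - Suc k))))"
    by (rule all_rev_idx)
  also have "\<dots> \<longleftrightarrow> (\<forall>k<l. (\<not> g!(L - Suc (j+k))) = w!k)"
  proof -
    have "\<And>k. k < l \<Longrightarrow> L - l - j + (l - Suc k) = L - Suc (j+k) \<and> l - Suc (l - Suc k) = k"
      using jl by auto
    then show ?thesis by auto
  qed
  finally show ?thesis using A by (simp add: l_def L_def)
qed

lemma occ_rc: "occ w (rc g) = occ (rc w) g"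
proof -
  define f where "f j = length g - length w - j" for j
  have "{j. mt w (rc g) j} = f ` {j. mt (rc w) g j}"
  proof (rule set_eqI)
    fix j
    show "j \<in> {j. mt w (rc g) j} \<longleftrightarrow> j \<in> f ` {j. mt (rc w) g j}"
    proof
      assume "j \<in> {j. mt w (rc g) j}"
      then have m: "mt w (rc g) j" and jl: "j + length w \<le> length g" by (auto simp: mt_def)
      have "mt (rc w) g (f j)" using mt_rc[OF jl] m by (simp add: f_def)
      moreover have "j = f (f j)" using jl by (simp add: f_def)
      ultimately show "j \<in> f ` {j. mt (rc w) g j}" by blast
    next
      assume "j \<in> f ` {j. mt (rc w) g j}"
      then obtain j' where m: "mt (rc w) g j'" and e: "j = f j'" by blast
      have jl': "j' + length w \<le> length g" using m by (auto simp: mt_def rc_def)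
      have jl: "j + length w \<le> length g" using jl' e by (simp add: f_def)
      have "f j = j'" using e jl' by (simp add: f_def)
      then show "j \<in> {j. mt w (rc g) j}" using mt_rc[OF jl] m by (simp add: f_def)
    qed
  qed
  moreover have "inj_on f {j. mt (rc w) g j}"
    by (rule inj_onI) (auto simp: f_def mt_def rc_def)
  ultimately show ?thesis by (simp add: occ_mt card_image)
qed

lemma height_rc:
  "i \<le> length g \<Longrightarrow> height (rc g) i = height g (length g - i) - height g (length g)"
proof (induction i)
  case (Suc i)
  have i: "i < length g" using Suc by simp
  have h: "height g (length g - i) = height g (length g - Suc i) + (if g!(length g - Suc i) then 1 else -1)"
    using height_Suc[of g "length g - Suc i"] i by (simp add: Suc_diff_Suc)
  show ?case using Suc i h by (simp add: height_Suc nth_rc)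
qed simp

lemma rc_dyck: "g \<in> dyck_paths n \<Longrightarrow> rc g \<in> dyck_paths n"
  by (auto simp: dyck_paths_def height_rc)

lemma sum_rc: "(\<Sum>g\<in>dyck_paths n. F (rc g)) = (\<Sum>g\<in>dyck_paths n. F g)"
  by (rule sum.reindex_bij_witness[where i=rc and j=rc]) (auto simp: rc_dyck)



definition Gp :: "bool list \<Rightarrow> int" where
  "Gp g = 2 * int (occ dduu g) + 2 * int (occ dudu g) + 2 * int (occ duuu g)
    + int (occ [False,True] g) * (int (occ [False,True] g) - 1) * (int (occ [False,True] g) - 2)
    + 6 * (int (occ [False,True] g) * int (occ duu g) - int (occ duu g))"

lemma pair_eq:
  assumes "g \<in> dyck_paths n"
  shows "int (cnt g) + int (cnt (rc g)) = Gp g + Gp (rc g)"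
proof -
  have r: "occ [False,True] (rc g) = occ [False,True] g" "occ ddu (rc g) = occ duu g"
    "occ duu (rc g) = occ ddu g" "occ dduu (rc g) = occ dduu g" "occ dudu (rc g) = occ dudu g"
    "occ dddu (rc g) = occ duuu g" "occ duuu (rc g) = occ dddu g"
    by (subst occ_rc; simp add: rc_def)+
  show ?thesis
    unfolding cnt_formula[OF assms] cnt_formula[OF rc_dyck[OF assms]] Gp_def r
    by (simp add: algebra_simps)
qed

lemma sum_cnt: "(\<Sum>g\<in>dyck_paths n. int (cnt g)) = (\<Sum>g\<in>dyck_paths n. Gp g)"
proof -
  have "2 * (\<Sum>g\<in>dyck_paths n. int (cnt g)) = (\<Sum>g\<in>dyck_paths n. int (cnt g) + int (cnt (rc g)))"
    using sum_rc[of "\<lambda>g. int (cnt g)" n] by (simp add: sum.distrib)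
  also have "\<dots> = (\<Sum>g\<in>dyck_paths n. Gp g + Gp (rc g))"
    by (rule sum.cong) (auto simp: pair_eq)
  also have "\<dots> = 2 * (\<Sum>g\<in>dyck_paths n. Gp g)"
    using sum_rc[of Gp n] by (simp add: sum.distrib)
  finally show ?thesis by simp
qed

theorem mainTheorem7:
  shows "SC3 = 2 * dq_at1 A_series + 2 * dq_at1 B_series + 2 * dq_at1 C_series
              + dq3_at1 V_series + 6 * (dydq_at11 F_series - dq_at11 F_series)"
proof (rule fps_ext)
  fix n
  have sc: "fps_nth SC3 n = (\<Sum>g\<in>dyck_paths n. Gp g)"
    by (simp add: SC3_def sc3_sum sum_cnt[symmetric])
  have a: "fps_nth (dq_at1 (gf_factor w)) n = (\<Sum>g\<in>dyck_paths n. int (occ w g))" for w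
    by (simp add: dq_at1_def gf_factor_def ev_dq1)
  have v: "fps_nth (dq3_at1 V_series) n = (\<Sum>g\<in>dyck_paths n. int (occ [False,True] g) * (int (occ [False,True] g) - 1)
       * (int (occ [False,True] g) - 2))"
    by (simp add: dq3_at1_def V_series_def gf_factor_def ev_dq3 del: funpow.simps)
  have f1: "fps_nth (dydq_at11 F_series) n = (\<Sum>g\<in>dyck_paths n. int (occ [False,True] g) * int (occ duu g))"
    by (simp add: dydq_at11_def F_series_def ev_F1)
  have f2: "fps_nth (dq_at11 F_series) n = (\<Sum>g\<in>dyck_paths n. int (occ duu g))"
    by (simp add: dq_at11_def F_series_def ev_F2)
  have two: "(2 :: int fps) = fps_const 2" and six: "(6 :: int fps) = fps_const 6"
    by (simp_all add: fps_numeral_fps_const)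
  show "fps_nth SC3 n = fps_nth (2 * dq_at1 A_series + 2 * dq_at1 B_series + 2 * dq_at1 C_series
              + dq3_at1 V_series + 6 * (dydq_at11 F_series - dq_at11 F_series)) n"
    unfolding two six
    by (simp add: sc a v f1 f2 A_series_def B_series_def C_series_def Gp_def sum.distrib
        sum_distrib_left sum_subtractf algebra_simps)
qed

end
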